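(* Let $k\ge 2$ and let $s$ be a normalized, fully $k$-ary string of length $n$. Then $d_{\rm g}(s)\le n-2$.
   Context: Strings are finite words over the alphabet $\{0,1,2,\dots\}$. A string is \emph{normalized} if no two adjacent symbols are equal; the \emph{normalization} of a string is obtained by replacing every maximal run of identical symbols by a single copy of that symbol. A string is \emph{fully $k$-ary} if the set of symbols occurring in it is exactly $\{0,1,\dots,k-1\}$. For a normalized string $s=s_1s_2\cdots s_n$ and $1\le i\le n$, the flip (prefix reversal) $f^{(i)}(s)$ is the normalization of $s_i s_{i-1}\cdots s_1 s_{i+1}\cdots s_n$. The \emph{grouping distance} $d_{\rm g}(s)$ of a normalized fully $k$-ary string $s$ is the minimum number of flips needed to transform $s$ into a string of length $k$. *)

theory Defs
  imports Main
begin

definition normalized :: "nat list \<Rightarrow> bool" where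
  "normalized s \<longleftrightarrow> (\<forall>i. Suc i < length s \<longrightarrow> s ! i \<noteq> s ! Suc i)"

definition normalize :: "nat list \<Rightarrow> nat list" where
  "normalize s = remdups_adj s"

definition fully_kary :: "nat \<Rightarrow> nat list \<Rightarrow> bool" where
  "fully_kary k s \<longleftrightarrow> set s = {0..<k}"

definition flip :: "nat \<Rightarrow> nat list \<Rightarrow> nat list" where
  "flip i s = normalize (rev (take i s) @ drop i s)"

definition flip_step :: "nat list \<Rightarrow> nat list \<Rightarrow> bool" where
  "flip_step s t \<longleftrightarrow> (\<exists>i. 1 \<le> i \<and> i \<le> length s \<and> t = flip i s)"

definition grouping_distance :: "nat \<Rightarrow> nat list \<Rightarrow> nat" where
  "grouping_distance k s = (LEAST m. \<exists>t. (flip_step ^^ m) s t \<and> length t = k)"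

end

theory Submission
  imports Defs
begin

lemma set_flip: "set (flip i s) = set s"
  unfolding flip_def normalize_def by simp (metis set_append append_take_drop_id)

lemma flip_step_set: "flip_step s t \<Longrightarrow> set t = set s"
  unfolding flip_step_def using set_flip by auto

lemma flip_append:
  assumes "i \<le> length xs" "u \<notin> set xs"
  shows "flip i (xs @ [u]) = flip i xs @ [u]"
proof -
  have 1: "rev (take i (xs @ [u])) @ drop i (xs @ [u]) = (rev (take i xs) @ drop i xs) @ [u]"
    using assms(1) by simp
  have "set (rev (take i xs) @ drop i xs) = set xs"
    using set_flip[of i xs] by (simp add: flip_def normalize_def)
  with assms(2) have 2: "u \<notin> set (rev (take i xs) @ drop i xs)" by simp
  have "remdups_adj ((rev (take i xs) @ drop i xs) @ [u]) = remdups_adj (rev (take i xs) @ drop i xs) @ remdups_adj [u]"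
  proof (rule remdups_adj_append')
    show "rev (take i xs) @ drop i xs = [] \<or> [u] = [] \<or> last (rev (take i xs) @ drop i xs) \<noteq> hd [u]"
    proof (cases "rev (take i xs) @ drop i xs = []")
      case False
      then have "last (rev (take i xs) @ drop i xs) \<in> set (rev (take i xs) @ drop i xs)"
        by (rule last_in_set)
      then have "last (rev (take i xs) @ drop i xs) \<noteq> u" using 2 by metis
      then show ?thesis by simp
    next
      case True
      then show ?thesis by (rule disjI1)
    qed
  qed
  then show ?thesis unfolding flip_def normalize_def 1 by simp
qed

lemma sim:
  "(flip_step ^^ m) xs ys \<Longrightarrow> u \<notin> set xs \<Longrightarrow> (flip_step ^^ m) (xs @ [u]) (ys @ [u])"
proof (induction m arbitrary: xs)
  case 0
  then show ?case by auto
next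
  case (Suc m)
  from Suc.prems(1) obtain x' where a: "flip_step xs x'" and b: "(flip_step ^^ m) x' ys"
    using relpowp_Suc_D2 by metis
  from a obtain i where i: "1 \<le> i" "i \<le> length xs" "x' = flip i xs"
    unfolding flip_step_def by auto
  have "u \<notin> set x'" using flip_step_set[OF a] Suc.prems(2) by simp
  from Suc.IH[OF b this] have c: "(flip_step ^^ m) (x' @ [u]) (ys @ [u])" .
  have "flip_step (xs @ [u]) (x' @ [u])"
    unfolding flip_step_def using i flip_append[OF i(2) Suc.prems(2)] by auto
  then show ?case using c by (rule relpowp_Suc_I2)
qed

lemma main:
  "distinct_adj s \<Longrightarrow> \<exists>m t. m \<le> length s - 2 \<and> (flip_step ^^ m) s t \<and> length t = card (set s)"
proof (induction "length s" arbitrary: s rule: less_induct)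
  case less
  show ?case
  proof (cases "length s = card (set s)")
    case True
    then show ?thesis by (intro exI[of _ 0] exI[of _ s]) auto
  next
    case False
    then have gt: "card (set s) < length s" using card_length[of s] by linarith
    then obtain u w where s: "s = u # w" by (cases s) auto
    show ?thesis
    proof (cases "u \<in> set w")
      case True
      then obtain j where j: "j < length w" "w ! j = u" by (auto simp: in_set_conv_nth)
      have wne: "w \<noteq> []" using True by auto
      have hdw: "hd w \<noteq> u" using less.prems s wne by (cases w) auto
      have c2: "card (set s) \<ge> 2"
      proof -
        have "{u, hd w} \<subseteq> set s" using s wne by auto
        then have "card {u, hd w} \<le> card (set s)" by (intro card_mono) auto
        then show ?thesis using hdw by simp
      qed
      define t where "t = flip (Suc j) s"
      have dw: "drop j w = u # drop (Suc j) w" using j by (metis Cons_nth_drop_Suc)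
      have arg: "rev (take (Suc j) s) @ drop (Suc j) s = rev (take j w) @ [u, u] @ drop (Suc j) w"
        using s dw by simp
      have nd: "\<not> distinct_adj (rev (take j w) @ [u, u] @ drop (Suc j) w)"
        by (simp add: distinct_adj_append_iff)
      have "length t < length (rev (take (Suc j) s) @ drop (Suc j) s)"
        unfolding t_def flip_def normalize_def arg
        using nd remdups_adj_length distinct_adj_conv_length_remdups_adj
        by (metis order_le_neq_trans)
      then have lt: "length t < length s" using j s by simp
      have dt: "distinct_adj t" unfolding t_def flip_def normalize_def by simp
      have st: "set t = set s" unfolding t_def by (rule set_flip)
      from less.hyps[OF lt dt] obtain m r where
        m: "m \<le> length t - 2" "(flip_step ^^ m) t r" "length r = card (set t)" by blast
      have "length t \<ge> 2" using c2 st card_length[of t] by simp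
      have step: "flip_step s t" unfolding flip_step_def t_def using j s by (intro exI[of _ "Suc j"]) auto
      have "(flip_step ^^ Suc m) s r" using step m(2) by (rule relpowp_Suc_I2)
      moreover have "Suc m \<le> length s - 2" using m(1) lt \<open>length t \<ge> 2\<close> by linarith
      ultimately show ?thesis using m(3) st by (intro exI[of _ "Suc m"] exI[of _ r]) simp
    next
      case False
      have ds: "distinct_adj w" using less.prems unfolding s by (rule distinct_adj_ConsD)
      have lw: "length w \<ge> 2"
      proof (rule ccontr)
        assume "\<not> 2 \<le> length w"
        then have "length w = 0 \<or> length w = Suc 0" by linarith
        then have "w = [] \<or> (\<exists>a. w = [a])" by (auto simp: length_Suc_conv)
        then show False using gt s False by auto
      qed
      define t' where "t' = rev w"
      have rs: "remdups_adj (rev s) = rev s"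
        using less.prems distinct_adj_altdef[of s] by simp
      have fl: "flip (length s) s = t' @ [u]"
        unfolding flip_def normalize_def t'_def using rs s by simp
      have step: "flip_step s (t' @ [u])"
        unfolding flip_step_def using fl s by (intro exI[of _ "length s"]) auto
      have lt: "length t' < length s" using s t'_def by simp
      have dt: "distinct_adj t'" using ds t'_def by simp
      from less.hyps[OF lt dt] obtain m r where
        m: "m \<le> length t' - 2" "(flip_step ^^ m) t' r" "length r = card (set t')" by blast
      have "(flip_step ^^ m) (t' @ [u]) (r @ [u])"
        using sim[OF m(2)] False t'_def by simp
      then have "(flip_step ^^ Suc m) s (r @ [u])" using step by (rule relpowp_Suc_I2[rotated])
      moreover have "Suc m \<le> length s - 2" using m(1) lw s t'_def by simp
      moreover have "length (r @ [u]) = card (set s)"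
        using m(3) s t'_def False by (simp add: card_insert_if)
      ultimately show ?thesis by (intro exI[of _ "Suc m"] exI[of _ "r @ [u]"]) simp
    qed
  qed
qed

theorem lemma3p2:
  fixes k :: nat and s :: "nat list"
  assumes "k \<ge> 2" and "normalized s" and "fully_kary k s"
  shows "grouping_distance k s \<le> length s - 2"
proof -
  have "distinct_adj s" using assms(2) by (simp add: normalized_def distinct_adj_conv_nth)
  from main[OF this] obtain m t where
    m: "m \<le> length s - 2" "(flip_step ^^ m) s t" "length t = card (set s)" by blast
  have "card (set s) = k" using assms(3) by (simp add: fully_kary_def)
  then have "\<exists>t. (flip_step ^^ m) s t \<and> length t = k" using m by auto
  then have "grouping_distance k s \<le> m" unfolding grouping_distance_def by (rule Least_le)
  then show ?thesis using m(1) by linarith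
qed

end
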